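(* A Möbius transformation of $\mathcal A_2^{(0,1)}\cup\{\infty\}$ fixes both $-1$ and $1$ if and only if its Vahlen matrices $\pm A$ are of the form $$A=\begin{pmatrix}\cosh x&\sinh x\\ \sinh x&\cosh x\end{pmatrix}\quad\text{for some }x\in\mathcal A_2.$$
   Context: $\mathcal A_2$ is the real associative algebra generated by $e_1,e_2$ with $e_1^2=e_2^2=-1$, $e_1e_2=-e_2e_1$ (basis $1,e_1,e_2,e_1e_2$). For $a=a_0+a_1e_1+a_2e_2+a_{12}e_1e_2$ let $a^*=a_0+a_1e_1+a_2e_2-a_{12}e_1e_2$ (the reverse involution, $(ab)^*=b^*a^*$). $\mathcal A_2^{(0,1)}=\mathbb R+\mathbb Re_1+\mathbb Re_2$. $\exp x=\sum_{m\ge0}x^m/m!$, $\cosh x=\tfrac12(\exp x+\exp(-x^* ))$, $\sinh x=\tfrac12(\exp x-\exp(-x^* ))$. A Vahlen matrix is $\begin{pmatrix}a&b\\c&d\end{pmatrix}$ with $a,b,c,d\in\mathcal A_2$, $ad^*-bc^*=1$ and $ab^*,cd^*\in\mathcal A_2^{(0,1)}$; it acts on $\mathcal A_2^{(0,1)}\cup\{\infty\}$ by $x\mapsto(ax+b)(cx+d)^{-1}$, $\infty\mapsto ac^{-1}$. The Möbius transformations (conformal orientation-preserving automorphisms) of $\mathcal A_2^{(0,1)}\cup\{\infty\}$ are exactly these maps, each given by exactly two Vahlen matrices $\pm A$. *)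

theory Defs
  imports Complex_Main
begin

datatype a2 = A2 (c0: real) (c1: real) (c2: real) (c12: real)

lemma a2_eq_iff: "x = y \<longleftrightarrow> c0 x = c0 y \<and> c1 x = c1 y \<and> c2 x = c2 y \<and> c12 x = c12 y"
  by (cases x; cases y) auto

instantiation a2 :: ring_1
begin
definition "0 = A2 0 0 0 0"
definition "1 = A2 1 0 0 0"
definition "x + y = A2 (c0 x + c0 y) (c1 x + c1 y) (c2 x + c2 y) (c12 x + c12 y)"
definition "x - y = A2 (c0 x - c0 y) (c1 x - c1 y) (c2 x - c2 y) (c12 x - c12 y)"
definition "- x = A2 (- c0 x) (- c1 x) (- c2 x) (- c12 x)"
text \<open>Multiplication from e1^2 = e2^2 = -1, e1 e2 = - e2 e1 (so (e1e2)^2 = -1,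
  e1(e1e2) = -e2, (e1e2)e1 = e2, e2(e1e2) = e1, (e1e2)e2 = -e1).\<close>
definition "x * y = A2
   (c0 x * c0 y - c1 x * c1 y - c2 x * c2 y - c12 x * c12 y)
   (c0 x * c1 y + c1 x * c0 y + c2 x * c12 y - c12 x * c2 y)
   (c0 x * c2 y - c1 x * c12 y + c2 x * c0 y + c12 x * c1 y)
   (c0 x * c12 y + c1 x * c2 y - c2 x * c1 y + c12 x * c0 y)"
instance
  by standard (auto simp: a2_eq_iff zero_a2_def one_a2_def plus_a2_def minus_a2_def
      uminus_a2_def times_a2_def algebra_simps)
end

definition e1 :: a2 where "e1 = A2 0 1 0 0"
definition e2 :: a2 where "e2 = A2 0 0 1 0"

definition a2_rev :: "a2 \<Rightarrow> a2" ("_\<^sup>*" [1000] 999)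
  where "x\<^sup>* = A2 (c0 x) (c1 x) (c2 x) (- c12 x)"

definition paravec :: "a2 set" where "paravec = {x. c12 x = 0}"

text \<open>Multiplicative inverse (A_2 is a division algebra); inverse of 0 is set to 0
  and never used in the action below.\<close>
definition a2_inv :: "a2 \<Rightarrow> a2" where
  "a2_inv x = (let n = (c0 x)\<^sup>2 + (c1 x)\<^sup>2 + (c2 x)\<^sup>2 + (c12 x)\<^sup>2 in
      A2 (c0 x / n) (- c1 x / n) (- c2 x / n) (- c12 x / n))"

text \<open>exp x = sum_{m>=0} x^m / m!, the series taken in the 4-dimensional real vector
  space A_2, i.e. componentwise (it converges absolutely for every x).\<close>
definition a2_exp :: "a2 \<Rightarrow> a2" where
  "a2_exp x = A2 (\<Sum>m. c0 (x ^ m) / fact m) (\<Sum>m. c1 (x ^ m) / fact m)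
                 (\<Sum>m. c2 (x ^ m) / fact m) (\<Sum>m. c12 (x ^ m) / fact m)"

definition half :: "a2 \<Rightarrow> a2" where
  "half x = A2 (c0 x / 2) (c1 x / 2) (c2 x / 2) (c12 x / 2)"

definition a2_cosh :: "a2 \<Rightarrow> a2" where
  "a2_cosh x = half (a2_exp x + a2_exp (- (x\<^sup>*)))"
definition a2_sinh :: "a2 \<Rightarrow> a2" where
  "a2_sinh x = half (a2_exp x - a2_exp (- (x\<^sup>*)))"

text \<open>A 2x2 matrix (a b; c d) is represented as the tuple (a, b, c, d).\<close>
type_synonym mat2 = "a2 \<times> a2 \<times> a2 \<times> a2"

definition vahlen :: "mat2 \<Rightarrow> bool" where
  "vahlen A = (case A of (a, b, c, d) \<Rightarrow>
     a * d\<^sup>* - b * c\<^sup>* = 1 \<and> a * b\<^sup>* \<in> paravec \<and> c * d\<^sup>* \<in> paravec)"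

definition mat_neg :: "mat2 \<Rightarrow> mat2" where
  "mat_neg A = (case A of (a, b, c, d) \<Rightarrow> (- a, - b, - c, - d))"

text \<open>Points of A_2^(0,1) \<union> {\<infinity>}: None is \<infinity>, Some x a finite point.\<close>
definition mob_act :: "mat2 \<Rightarrow> a2 option \<Rightarrow> a2 option" where
  "mob_act A p = (case A of (a, b, c, d) \<Rightarrow>
     (case p of
        None \<Rightarrow> (if c = 0 then None else Some (a * a2_inv c))
      | Some x \<Rightarrow> (if c * x + d = 0 then None
                   else Some ((a * x + b) * a2_inv (c * x + d)))))"

definition cosh_sinh_mat :: "a2 \<Rightarrow> mat2" where
  "cosh_sinh_mat x = (a2_cosh x, a2_sinh x, a2_sinh x, a2_cosh x)"

end

theory Submission imports Defs "HOL-Analysis.Complex_Transcendental" begin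

lemma comps[simp]:
  "c0 (x+y) = c0 x + c0 y" "c1 (x+y) = c1 x + c1 y" "c2 (x+y) = c2 x + c2 y" "c12 (x+y) = c12 x + c12 y"
  "c0 (x-y) = c0 x - c0 y" "c1 (x-y) = c1 x - c1 y" "c2 (x-y) = c2 x - c2 y" "c12 (x-y) = c12 x - c12 y"
  "c0 (-x) = - c0 x" "c1 (-x) = - c1 x" "c2 (-x) = - c2 x" "c12 (-x) = - c12 x"
  "c0 0 = 0" "c1 0 = 0" "c2 0 = 0" "c12 0 = 0"
  "c0 1 = 1" "c1 1 = 0" "c2 1 = 0" "c12 1 = 0"
  "c0 (a2_rev x) = c0 x" "c1 (a2_rev x) = c1 x" "c2 (a2_rev x) = c2 x" "c12 (a2_rev x) = - c12 x"
  "c0 (half x) = c0 x / 2" "c1 (half x) = c1 x / 2" "c2 (half x) = c2 x / 2" "c12 (half x) = c12 x / 2"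
  by (simp_all add: plus_a2_def minus_a2_def uminus_a2_def zero_a2_def one_a2_def a2_rev_def half_def)

lemma compm[simp]:
  "c0 (x * y) = c0 x * c0 y - c1 x * c1 y - c2 x * c2 y - c12 x * c12 y"
  "c1 (x * y) = c0 x * c1 y + c1 x * c0 y + c2 x * c12 y - c12 x * c2 y"
  "c2 (x * y) = c0 x * c2 y - c1 x * c12 y + c2 x * c0 y + c12 x * c1 y"
  "c12 (x * y) = c0 x * c12 y + c1 x * c2 y - c2 x * c1 y + c12 x * c0 y"
  by (simp_all add: times_a2_def)

lemma rev_rev[simp]: "a2_rev (a2_rev x) = x" by (simp add: a2_eq_iff)
lemma rev_mult: "a2_rev (x * y) = a2_rev y * a2_rev x" by (simp add: a2_eq_iff algebra_simps)

lemma inv_left: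
  assumes "x \<noteq> 0" shows "a2_inv x * x = 1"
proof -
  define n where "n = (c0 x)\<^sup>2 + (c1 x)\<^sup>2 + (c2 x)\<^sup>2 + (c12 x)\<^sup>2"
  have "n \<noteq> 0" using assms unfolding n_def
    by (auto simp: a2_eq_iff add_nonneg_eq_0_iff)
  have i: "a2_inv x = A2 (c0 x / n) (- c1 x / n) (- c2 x / n) (- c12 x / n)"
    unfolding a2_inv_def Let_def n_def by simp
  have "c0 x * c0 x + c1 x * c1 x + c2 x * c2 x + c12 x * c12 x = n"
    by (simp add: n_def power2_eq_square)
  with \<open>n \<noteq> 0\<close> show ?thesis unfolding i
    by (simp add: a2_eq_iff divide_simps)
qed

lemma inv_right:
  assumes "x \<noteq> 0" shows "x * a2_inv x = 1"
proof -
  define n where "n = (c0 x)\<^sup>2 + (c1 x)\<^sup>2 + (c2 x)\<^sup>2 + (c12 x)\<^sup>2"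
  have "n \<noteq> 0" using assms unfolding n_def
    by (auto simp: a2_eq_iff add_nonneg_eq_0_iff)
  have i: "a2_inv x = A2 (c0 x / n) (- c1 x / n) (- c2 x / n) (- c12 x / n)"
    unfolding a2_inv_def Let_def n_def by simp
  have "c0 x * c0 x + c1 x * c1 x + c2 x * c2 x + c12 x * c12 x = n"
    by (simp add: n_def power2_eq_square)
  with \<open>n \<noteq> 0\<close> show ?thesis unfolding i
    by (simp add: a2_eq_iff divide_simps)
qed

definition phi :: "a2 \<Rightarrow> complex \<Rightarrow> a2" where
  "phi n z = A2 (Re z) (Im z * c1 n) (Im z * c2 n) (Im z * c12 n)"

lemma phi_comps[simp]: "c0 (phi n z) = Re z" "c1 (phi n z) = Im z * c1 n"
  "c2 (phi n z) = Im z * c2 n" "c12 (phi n z) = Im z * c12 n"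
  by (simp_all add: phi_def)

lemma phi_mult:
  assumes "(c1 n)\<^sup>2 + (c2 n)\<^sup>2 + (c12 n)\<^sup>2 = 1"
  shows "phi n (z * w) = phi n z * phi n w"
proof -
  have "Im z * Im w = Im z * Im w * ((c1 n)\<^sup>2 + (c2 n)\<^sup>2 + (c12 n)\<^sup>2)" using assms by simp
  then show ?thesis by (simp add: a2_eq_iff algebra_simps power2_eq_square)
qed

lemma phi_one: "phi n 1 = 1" by (simp add: a2_eq_iff)

lemma phi_power:
  assumes "(c1 n)\<^sup>2 + (c2 n)\<^sup>2 + (c12 n)\<^sup>2 = 1"
  shows "phi n (z ^ m) = (phi n z) ^ m"
  by (induction m) (simp_all add: phi_one phi_mult[OF assms])

lemma exp_phi:
  assumes "(c1 n)\<^sup>2 + (c2 n)\<^sup>2 + (c12 n)\<^sup>2 = 1"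
  shows "a2_exp (phi n z) = phi n (exp z)"
proof -
  have s1: "(\<lambda>m. Re (z ^ m) / fact m) sums Re (exp z)"
    using sums_Re[OF exp_converges[of z]] by (simp add: divide_inverse mult.commute)
  have s2: "(\<lambda>m. Im (z ^ m) / fact m) sums Im (exp z)"
    using sums_Im[OF exp_converges[of z]] by (simp add: divide_inverse mult.commute)
  have s3: "\<And>c. (\<lambda>m. Im (z ^ m) * c / fact m) sums (Im (exp z) * c)"
    using sums_mult2[OF s2] by (simp add: field_simps)
  show ?thesis
    unfolding a2_exp_def phi_power[OF assms, symmetric]
    using sums_unique[OF s1] sums_unique[OF s3]
    by (simp add: a2_eq_iff)
qed

lemma paravec_rev: "x \<in> paravec \<Longrightarrow> a2_rev x = x"
  by (simp add: paravec_def a2_eq_iff)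

lemma fixes_sym:
  assumes "vahlen (a, b, b, a)"
  shows "mob_act (a, b, b, a) (Some (- 1)) = Some (- 1) \<and> mob_act (a, b, b, a) (Some 1) = Some 1"
proof -
  have v: "a * a2_rev a - b * a2_rev b = 1" using assms by (simp add: vahlen_def)
  have ab: "a + b \<noteq> 0"
  proof
    assume "a + b = 0"
    then have "b = - a" by (simp add: eq_neg_iff_add_eq_0 add.commute)
    then show False using v by (simp add: a2_eq_iff)
  qed
  have amb: "a - b \<noteq> 0"
  proof
    assume "a - b = 0"
    then have "b = a" by simp
    then show False using v by simp
  qed
  have e1: "b * 1 + a = a + b" by (simp add: add.commute)
  have e2: "b * (- 1) + a = a - b" by simp
  have e3: "a * (- 1) + b = - (a - b)" by simp
  have f1: "b + a \<noteq> 0" using ab by (simp add: add.commute)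
  have f2: "(a + b) * a2_inv (b + a) = 1" using inv_right[OF ab] by (simp add: add.commute)
  have f3: "(b - a) * a2_inv (a - b) = - 1"
  proof -
    have "b - a = - (a - b)" by simp
    then have "(b - a) * a2_inv (a - b) = - ((a - b) * a2_inv (a - b))"
      by (metis minus_mult_left)
    then show ?thesis using inv_right[OF amb] by simp
  qed
  show ?thesis unfolding mob_act_def
    using f1 f2 f3 amb by simp
qed

lemma exp_surj:
  assumes "u \<noteq> 0"
  shows "\<exists>x. a2_exp x = u \<and> u * a2_rev (a2_exp (- a2_rev x)) = 1"
proof -
  define r where "r = sqrt ((c1 u)\<^sup>2 + (c2 u)\<^sup>2 + (c12 u)\<^sup>2)"
  define n where "n = (if r = 0 then e1 else A2 0 (c1 u / r) (c2 u / r) (c12 u / r))"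
  define m where "m = A2 0 (c1 n) (c2 n) (- c12 n)"
  define w where "w = Complex (c0 u) r"
  define z where "z = Ln w"
  define x where "x = phi n z"
  have r2: "r\<^sup>2 = (c1 u)\<^sup>2 + (c2 u)\<^sup>2 + (c12 u)\<^sup>2" unfolding r_def by simp
  have nn: "(c1 n)\<^sup>2 + (c2 n)\<^sup>2 + (c12 n)\<^sup>2 = 1"
  proof (cases "r = 0")
    case True then show ?thesis by (simp add: n_def e1_def)
  next
    case False
    have "(c1 u / r)\<^sup>2 + (c2 u / r)\<^sup>2 + (c12 u / r)\<^sup>2 = ((c1 u)\<^sup>2 + (c2 u)\<^sup>2 + (c12 u)\<^sup>2) / r\<^sup>2"
      by (simp add: power_divide add_divide_distrib)
    also have "\<dots> = 1" using False by (simp add: r2[symmetric])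
    finally have "(c1 u / r)\<^sup>2 + (c2 u / r)\<^sup>2 + (c12 u / r)\<^sup>2 = 1" .
    with False show ?thesis by (simp add: n_def)
  qed
  have mm: "(c1 m)\<^sup>2 + (c2 m)\<^sup>2 + (c12 m)\<^sup>2 = 1" using nn by (simp add: m_def)
  have r0: "r = 0 \<Longrightarrow> c1 u = 0 \<and> c2 u = 0 \<and> c12 u = 0"
    using r2 by (auto simp: add_nonneg_eq_0_iff)
  have wu: "phi n w = u"
  proof (cases "r = 0")
    case True then show ?thesis using r0 by (simp add: a2_eq_iff w_def)
  next
    case False then show ?thesis by (simp add: a2_eq_iff w_def n_def)
  qed
  have w0: "w \<noteq> 0"
  proof
    assume "w = 0"
    then have "c0 u = 0" "r = 0" by (auto simp: w_def complex_eq_iff)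
    then show False using r0 assms by (simp add: a2_eq_iff)
  qed
  have ex: "a2_exp x = u" unfolding x_def exp_phi[OF nn] z_def using w0 wu by simp
  have mx: "- a2_rev x = phi m (- z)" by (simp add: a2_eq_iff x_def m_def)
  have rv: "\<And>q. a2_rev (phi m q) = phi n q" by (simp add: a2_eq_iff m_def)
  have "u * a2_rev (a2_exp (- a2_rev x)) = phi n (exp z) * phi n (exp (- z))"
    unfolding mx exp_phi[OF mm] rv using ex exp_phi[OF nn] x_def by simp
  also have "\<dots> = 1" by (simp add: phi_mult[OF nn, symmetric] exp_minus_inverse phi_one)
  finally show ?thesis using ex by auto
qed

lemma uniq_rinv:
  fixes u p q :: a2
  assumes "u \<noteq> 0" "u * p = 1" "u * q = 1" shows "p = q"
proof -
  have "p = (a2_inv u * u) * p" using inv_left[OF assms(1)] by simp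
  also have "\<dots> = a2_inv u" using assms(2) by (simp add: mult.assoc)
  also have "\<dots> = (a2_inv u * u) * q" using assms(3) by (simp add: mult.assoc)
  also have "\<dots> = q" using inv_left[OF assms(1)] by simp
  finally show ?thesis .
qed

theorem proposition3p3:
  assumes "vahlen A"
  shows "(mob_act A (Some (- 1)) = Some (- 1) \<and> mob_act A (Some 1) = Some 1) \<longleftrightarrow>
         (\<exists>x. A = cosh_sinh_mat x \<or> mat_neg A = cosh_sinh_mat x)"
proof
  assume fx: "mob_act A (Some (- 1)) = Some (- 1) \<and> mob_act A (Some 1) = Some 1"
  obtain a b c d where A: "A = (a, b, c, d)" by (cases A) auto
  from fx have h1: "c * 1 + d \<noteq> 0" "(a * 1 + b) * a2_inv (c * 1 + d) = 1"
    by (auto simp: A mob_act_def split: if_splits)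
  from fx have h2: "c * (-1) + d \<noteq> 0" "(a * (-1) + b) * a2_inv (c * (-1) + d) = -1"
    by (auto simp: A mob_act_def split: if_splits)
  have s1: "a + b = c + d"
  proof -
    have "a * 1 + b = ((a * 1 + b) * a2_inv (c * 1 + d)) * (c * 1 + d)"
      using inv_left[OF h1(1)] by (simp add: mult.assoc)
    then show ?thesis using h1(2) by (simp add: add.commute)
  qed
  have s2: "b - a = c - d"
  proof -
    have "a * (-1) + b = ((a * (-1) + b) * a2_inv (c * (-1) + d)) * (c * (-1) + d)"
      using inv_left[OF h2(1)] by (simp add: mult.assoc)
    then show ?thesis using h2(2) by simp
  qed
  have bc: "c = b" "d = a" using s1 s2 by (auto simp: a2_eq_iff)
  have v: "a * a2_rev a - b * a2_rev b = 1" "a * a2_rev b \<in> paravec"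
    using assms by (auto simp: A bc vahlen_def)
  have u0: "a + b \<noteq> 0" using h1(1) by (simp add: bc add.commute)
  have ba: "b * a2_rev a = a * a2_rev b"
    using paravec_rev[OF v(2)] by (simp add: rev_mult)
  have uw: "(a + b) * a2_rev (a - b) = 1"
  proof -
    have "a2_rev (a - b) = a2_rev a - a2_rev b" by (simp add: a2_eq_iff)
    moreover have "(a + b) * (a2_rev a - a2_rev b) = a * a2_rev a - b * a2_rev b + (b * a2_rev a - a * a2_rev b)"
      by (simp add: algebra_simps)
    ultimately have "(a + b) * a2_rev (a - b) = a * a2_rev a - b * a2_rev b + (b * a2_rev a - a * a2_rev b)"
      by simp
    then show ?thesis using v(1) ba by simp
  qed
  obtain x where x1: "a2_exp x = a + b" and x2: "(a + b) * a2_rev (a2_exp (- a2_rev x)) = 1"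
    using exp_surj[OF u0] by blast
  have "a2_rev (a2_exp (- a2_rev x)) = a2_rev (a - b)" using uniq_rinv[OF u0 x2 uw] .
  then have x3: "a2_exp (- a2_rev x) = a - b" by (metis rev_rev)
  have "A = cosh_sinh_mat x"
    unfolding A bc cosh_sinh_mat_def a2_cosh_def a2_sinh_def x1 x3
    by (simp add: a2_eq_iff)
  then show "\<exists>x. A = cosh_sinh_mat x \<or> mat_neg A = cosh_sinh_mat x" by blast
next
  assume "\<exists>x. A = cosh_sinh_mat x \<or> mat_neg A = cosh_sinh_mat x"
  then obtain a b where "A = (a, b, b, a)"
    by (cases A) (auto simp: cosh_sinh_mat_def mat_neg_def, metis neg_equal_iff_equal)
  then show "mob_act A (Some (- 1)) = Some (- 1) \<and> mob_act A (Some 1) = Some 1"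
    using fixes_sym assms by simp
qed

end
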